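(* The group $G$ has exactly three orbits on the points of $\Pi$, namely $\{N\}$, $\mathcal Q$, and $\Pi\setminus(\mathcal Q\cup\{N\})$.
   Context: Let $q$ be an even prime power and $\mathrm{PG}(5,q^2)$ have homogeneous coordinates $(X_1,\dots,X_6)$, points written as column vectors. Let $\Sigma$ be the set of points having a coordinate vector $(\alpha,\alpha^q,\delta_0,\beta,\beta^q,\delta_1)$ with $\alpha,\beta\in\mathbb F_{q^2}$, $\delta_0,\delta_1\in\mathbb F_q$ (a Baer subgeometry $\cong\mathrm{PG}(5,q)$). Let $\Pi=\Sigma\cap\{X_6=0\}$, $\mathcal Q=\Sigma\cap\{X_6=0,\ X_3^2+X_1X_5+X_2X_4=0\}$ (a parabolic quadric $\mathcal Q(4,q)$ of $\Pi$) with nucleus $N=(0,0,1,0,0,0)$. Fix $\omega\in\mathbb F_{q^2}\setminus\mathbb F_q$ with $\omega+\omega^q=1$. For $a,b,c,d\in\mathbb F_{q^2}$ with $ad+bc=1$ let $M_{a,b,c,d}$ be the $6\times6$ matrix with rows $(a^2,0,0,0,c^2,\tfrac{c(a+c\omega^q)}{\omega})$, $(0,a^{2q},0,c^{2q},0,\tfrac{c^q(a^q+c^q\omega)}{\omega^q})$, $(ab,a^qb^q,1,c^qd^q,cd,\tfrac{d(a+c\omega^q)}{\omega}+\tfrac{d^q(a^q+c^q\omega)}{\omega^q}+\tfrac{1}{\omega^{q+1}})$, $(0,b^{2q},0,d^{2q},0,\tfrac{d^q(b^q+d^q\omega)+\omega}{\omega^q})$, $(b^2,0,0,0,d^2,\tfrac{d(b+d\omega^q)+\omega^q}{\omega})$,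 $(0,0,0,0,0,1)$, and let $G\cong\mathrm{PSL}(2,q^2)$ be the group of projectivities $X\mapsto M_{a,b,c,d}X$; $G$ stabilizes $\Sigma$, $\Pi$, $\mathcal Q$ and $N$. *)

theory Defs
  imports Main
begin

text \<open>The field F_{q^2} is an abstract finite field type 'a with CARD('a) = q^2;
  F_q is the fixed field of the Frobenius x \<mapsto> x^q. Coordinate vectors of PG(5,q^2) are
  functions nat \<Rightarrow> 'a of which only the coordinates 1..6 are used. A point of PG(5,q^2)
  is identified with the set of all its (nonzero) coordinate vectors.\<close>

definition subfield_q :: "nat \<Rightarrow> 'a::field set" where
  "subfield_q q = {x. x ^ q = x}"

definition nonzero6 :: "(nat \<Rightarrow> 'a::field) \<Rightarrow> bool" where
  "nonzero6 v \<longleftrightarrow> (\<exists>i\<in>{1..6}. v i \<noteq> 0)"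

definition proj_eq :: "(nat \<Rightarrow> 'a::field) \<Rightarrow> (nat \<Rightarrow> 'a) \<Rightarrow> bool" where
  "proj_eq u v \<longleftrightarrow> nonzero6 u \<and> (\<exists>c. c \<noteq> 0 \<and> (\<forall>i\<in>{1..6}. v i = c * u i))"

definition proj_pt :: "(nat \<Rightarrow> 'a::field) \<Rightarrow> (nat \<Rightarrow> 'a) set" where
  "proj_pt u = {v. proj_eq u v}"

definition vec6 :: "'a \<Rightarrow> 'a \<Rightarrow> 'a \<Rightarrow> 'a \<Rightarrow> 'a \<Rightarrow> 'a \<Rightarrow> nat \<Rightarrow> 'a::zero" where
  "vec6 x1 x2 x3 x4 x5 x6 = (\<lambda>i. if i = 1 then x1 else if i = 2 then x2 else if i = 3 then x3
      else if i = 4 then x4 else if i = 5 then x5 else if i = 6 then x6 else 0)"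

definition Sigma_pts :: "nat \<Rightarrow> (nat \<Rightarrow> 'a::field) set" where
  "Sigma_pts q = {v. \<exists>\<alpha> \<beta> \<delta>0 \<delta>1. \<delta>0 \<in> subfield_q q \<and> \<delta>1 \<in> subfield_q q \<and>
       proj_eq (vec6 \<alpha> (\<alpha> ^ q) \<delta>0 \<beta> (\<beta> ^ q) \<delta>1) v}"

definition Pi_pts :: "nat \<Rightarrow> (nat \<Rightarrow> 'a::field) set" where
  "Pi_pts q = {v \<in> Sigma_pts q. v 6 = 0}"

definition Q_pts :: "nat \<Rightarrow> (nat \<Rightarrow> 'a::field) set" where
  "Q_pts q = {v \<in> Pi_pts q. (v 3)\<^sup>2 + v 1 * v 5 + v 2 * v 4 = 0}"

definition N_vec :: "nat \<Rightarrow> 'a::field" where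
  "N_vec = vec6 0 0 1 0 0 0"

definition N_pt :: "(nat \<Rightarrow> 'a::field) set" where
  "N_pt = proj_pt N_vec"

definition Mmat :: "nat \<Rightarrow> 'a::field \<Rightarrow> 'a \<Rightarrow> 'a \<Rightarrow> 'a \<Rightarrow> 'a \<Rightarrow> nat \<Rightarrow> nat \<Rightarrow> 'a" where
  "Mmat q w a b c d i j =
    ([[a^2, 0, 0, 0, c^2, c * (a + c * w^q) / w],
      [0, a^(2*q), 0, c^(2*q), 0, c^q * (a^q + c^q * w) / w^q],
      [a*b, a^q * b^q, 1, c^q * d^q, c*d,
         d * (a + c * w^q) / w + d^q * (a^q + c^q * w) / w^q + 1 / w^(q+1)],
      [0, b^(2*q), 0, d^(2*q), 0, (d^q * (b^q + d^q * w) + w) / w^q],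
      [b^2, 0, 0, 0, d^2, (d * (b + d * w^q) + w^q) / w],
      [0, 0, 0, 0, 0, 1]] ! (i - 1)) ! (j - 1)"

definition mat_vec :: "(nat \<Rightarrow> nat \<Rightarrow> 'a::field) \<Rightarrow> (nat \<Rightarrow> 'a) \<Rightarrow> nat \<Rightarrow> 'a" where
  "mat_vec M v = (\<lambda>i. \<Sum>j\<in>{1..6}. M i j * v j)"

definition G_orbit :: "nat \<Rightarrow> 'a::field \<Rightarrow> (nat \<Rightarrow> 'a) \<Rightarrow> (nat \<Rightarrow> 'a) set" where
  "G_orbit q w u = {v. \<exists>a b c d. a * d + b * c = 1 \<and> proj_eq (mat_vec (Mmat q w a b c d) u) v}"

end

theory Submission
  imports Defs
begin

locale c2f =
  fixes q :: nat and w :: "'a::{field,finite}"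
  assumes two: "(2::'a) = 0"
    and frob: "\<And>x y :: 'a. (x + y) ^ q = x ^ q + y ^ q"
    and fq2: "\<And>x :: 'a. x ^ (q * q) = x"
    and qpos: "q > 0"
begin

lemma dbl[simp]: "(x::'a) + x = 0"
proof -
  have "x + x = 2 * x" by simp
  thus ?thesis using two by simp
qed

lemma two_mult[simp]: "(2::'a) * x = 0" using two by simp
lemma two_mult'[simp]: "x * (2::'a) = 0" using two by simp

lemma neg[simp]: "- (x::'a) = x"
  by (metis add_eq_0_iff dbl)

lemma minus_is_plus[simp]: "(x::'a) - y = x + y"
  by (metis diff_minus_eq_add neg)

lemma sq_add: "((x::'a) + y) ^ 2 = x ^ 2 + y ^ 2"
proof -
  have "(x + y) ^ 2 = x^2 + y^2 + 2 * (x * y)" by (simp add: power2_eq_square algebra_simps)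
  thus ?thesis using two by simp
qed

lemma pow2q_add: "((x::'a) + y) ^ (2*q) = x ^ (2*q) + y ^ (2*q)"
  by (simp add: power_mult sq_add frob)

lemma pow2q_add': "((x::'a) + y) ^ (q*2) = x ^ (q*2) + y ^ (q*2)"
  by (metis pow2q_add mult.commute)

lemma qq: "((x::'a) ^ q) ^ q = x"
  by (metis fq2 power_mult)

lemma zero_q[simp]: "(0::'a) ^ q = 0" using qpos by simp

lemma sq_inj: "(x::'a) ^ 2 = y ^ 2 \<Longrightarrow> x = y"
proof -
  assume "x ^ 2 = y ^ 2"
  hence "(x + y) ^ 2 = 0" by (simp add: sq_add)
  hence "x + y = 0" by simp
  thus "x = y" by (metis add_eq_0_iff neg)
qed

lemma sq_surj: "\<exists>x::'a. x ^ 2 = z"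
proof -
  have "inj (\<lambda>x::'a. x ^ 2)" by (auto intro: injI sq_inj)
  hence "surj (\<lambda>x::'a. x ^ 2)" using finite_UNIV_inj_surj[of "\<lambda>x::'a. x^2"] by simp
  thus ?thesis by (metis surjD)
qed

lemma sqrt_fq: "(x::'a) ^ 2 = z \<Longrightarrow> z ^ q = z \<Longrightarrow> x ^ q = x"
  by (rule sq_inj) (metis power_mult mult.commute)

definition T :: "'a \<Rightarrow> 'a" where "T z = z + z ^ q"

lemma T_fq: "(T z) ^ q = T z"
  by (simp add: T_def frob qq add.commute)

lemma T_add: "T (x + y) = T x + T y"
  by (simp add: T_def frob algebra_simps)

lemma T_0[simp]: "T 0 = 0" by (simp add: T_def)

lemma T_scale: "m ^ q = m \<Longrightarrow> T (m * z) = m * T z"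
  by (simp add: T_def power_mult_distrib algebra_simps)

definition P :: "'a \<Rightarrow> 'a \<Rightarrow> 'a \<Rightarrow> nat \<Rightarrow> 'a" where
  "P x y d = vec6 (x^2) (x^(2*q)) d (y^(2*q)) (y^2) 0"

lemma sum6: "(\<Sum>j\<in>{1..6::nat}. f j) = f 1 + f 2 + f 3 + f 4 + f 5 + f 6"
proof -
  have "{1..6::nat} = {1,2,3,4,5,6}" by auto
  thus ?thesis by (simp add: algebra_simps)
qed

lemma MP:
  assumes "i \<in> {1..6}"
  shows "mat_vec (Mmat q w a b c d) (P x y dl) i
     = P (a*x+c*y) (b*x+d*y) (dl + T (a*b*x^2) + T (c*d*y^2)) i"
proof -
  have "i = 1 \<or> i = 2 \<or> i = 3 \<or> i = 4 \<or> i = 5 \<or> i = 6" using assms by auto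
  thus ?thesis
    apply (elim disjE)
    unfolding mat_vec_def sum6
    apply (simp_all add: Mmat_def P_def vec6_def T_def)
    apply (simp_all add: sq_add pow2q_add power_mult_distrib power_mult[symmetric] algebra_simps)
    apply (simp_all add: pow2q_add' power_mult_distrib)
    done
qed

lemma pe_cong:
  assumes "\<forall>i\<in>{1..6}. u' i = s * u i" "s \<noteq> 0"
  shows "proj_eq u' v \<longleftrightarrow> proj_eq u v"
proof
  assume h: "proj_eq u' v"
  then obtain c where c: "c \<noteq> 0" "\<forall>i\<in>{1..6}. v i = c * u' i" unfolding proj_eq_def by blast
  have "nonzero6 u" using h assms unfolding proj_eq_def nonzero6_def by auto
  moreover have "\<forall>i\<in>{1..6}. v i = (c * s) * u i" using c assms by simp
  ultimately show "proj_eq u v" unfolding proj_eq_def using c assms by (metis mult_eq_0_iff)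
next
  assume h: "proj_eq u v"
  then obtain c where c: "c \<noteq> 0" "\<forall>i\<in>{1..6}. v i = c * u i" unfolding proj_eq_def by blast
  have "nonzero6 u'" using h assms unfolding proj_eq_def nonzero6_def by auto
  moreover have "\<forall>i\<in>{1..6}. v i = (c / s) * u' i" using c assms by simp
  ultimately show "proj_eq u' v" unfolding proj_eq_def using c assms by (metis divide_eq_0_iff)
qed

lemma pe_trans: "proj_eq u v \<Longrightarrow> proj_eq v z \<Longrightarrow> proj_eq u z"
  unfolding proj_eq_def by (metis mult.assoc mult_eq_0_iff)

lemma pe_refl: "nonzero6 u \<Longrightarrow> proj_eq u u"
  unfolding proj_eq_def by (metis mult_1 one_neq_zero)

lemma pe_nz: "proj_eq u v \<Longrightarrow> nonzero6 u" unfolding proj_eq_def by simp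

lemma six: "{1..6::nat} = {1,2,3,4,5,6}" by auto

lemma P_nz: "nonzero6 (P x y d) \<longleftrightarrow> x \<noteq> 0 \<or> y \<noteq> 0 \<or> d \<noteq> 0"
  unfolding nonzero6_def P_def six using qpos by (auto simp: vec6_def)


lemma Pi_char: "v \<in> Pi_pts q \<longleftrightarrow> (\<exists>x y d. d ^ q = d \<and> proj_eq (P x y d) v)"
proof
  assume "v \<in> Pi_pts q"
  then obtain al be d0 d1 where h: "d0 ^ q = d0" "proj_eq (vec6 al (al ^ q) d0 be (be ^ q) d1) v"
     "v 6 = 0"
    unfolding Pi_pts_def Sigma_pts_def subfield_q_def by blast
  then obtain c where c: "c \<noteq> 0" "\<forall>i\<in>{1..6}. v i = c * vec6 al (al ^ q) d0 be (be ^ q) d1 i"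
    unfolding proj_eq_def by blast
  have "v 6 = c * d1" using c(2) by (simp add: vec6_def)
  hence d1: "d1 = 0" using h(3) c(1) by simp
  obtain x where x: "x ^ 2 = al" using sq_surj by blast
  obtain y where y: "y ^ 2 = be ^ q" using sq_surj by blast
  have x2: "x ^ (2*q) = al ^ q" using x by (simp add: power_mult)
  have y2: "y ^ (2*q) = be" using y by (simp add: power_mult qq)
  have "P x y d0 = vec6 al (al ^ q) d0 be (be ^ q) d1"
    unfolding P_def x2 y2 x y d1 ..
  hence "proj_eq (P x y d0) v" using h(2) by simp
  thus "\<exists>x y d. d ^ q = d \<and> proj_eq (P x y d) v" using h(1) by blast
next
  assume "\<exists>x y d. d ^ q = d \<and> proj_eq (P x y d) v"
  then obtain x y d where h: "d ^ q = d" "proj_eq (P x y d) v" by blast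
  have e1: "x ^ (2*q) = (x^2)^q" by (simp add: power_mult)
  have e2: "y^2 = (y^(2*q))^q"
    by (metis fq2 power_mult mult.assoc mult.commute)
  have e: "P x y d = vec6 (x^2) ((x^2)^q) d (y^(2*q)) ((y^(2*q))^q) 0"
    unfolding P_def e1 e2[symmetric] ..
  have "v 6 = 0" using h(2) unfolding proj_eq_def P_def by (auto simp: vec6_def)
  moreover have "proj_eq (vec6 (x^2) ((x^2)^q) d (y^(2*q)) ((y^(2*q))^q) 0) v" using h(2) e by simp
  hence "v \<in> Sigma_pts q" unfolding Sigma_pts_def subfield_q_def using h(1) zero_q by blast
  ultimately show "v \<in> Pi_pts q" unfolding Pi_pts_def by simp
qed

definition Inv :: "'a \<Rightarrow> 'a \<Rightarrow> 'a \<Rightarrow> 'a" where "Inv x y d = d + T (x * y)"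

lemma N_eq: "N_vec = P 0 0 1"
  unfolding N_vec_def P_def using qpos by (simp add: zero_power)

lemma N_char:
  assumes "proj_eq (P x y d) v"
  shows "v \<in> N_pt \<longleftrightarrow> x = 0 \<and> y = 0"
proof
  assume "v \<in> N_pt"
  hence "proj_eq (P 0 0 1) v" unfolding N_pt_def proj_pt_def N_eq by simp
  then obtain c where c: "\<forall>i\<in>{1..6}. v i = c * P 0 0 1 i" unfolding proj_eq_def by blast
  obtain s where s: "s \<noteq> 0" "\<forall>i\<in>{1..6}. v i = s * P x y d i" using assms unfolding proj_eq_def by blast
  have "v 1 = 0" "v 5 = 0" using c by (auto simp: P_def vec6_def)
  moreover have "v 1 = s * x^2" "v 5 = s * y^2" using s by (auto simp: P_def vec6_def)
  ultimately show "x = 0 \<and> y = 0" using s by simp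
next
  assume xy: "x = 0 \<and> y = 0"
  hence d: "d \<noteq> 0" using assms pe_nz P_nz by blast
  have "\<forall>i\<in>{1..6}. P x y d i = d * P 0 0 1 i" using xy qpos by (auto simp: P_def vec6_def)
  hence "proj_eq (P 0 0 1) v" using pe_cong[of "P x y d" d "P 0 0 1" v] d assms by simp
  thus "v \<in> N_pt" unfolding N_pt_def proj_pt_def N_eq by simp
qed

lemma Q_char:
  assumes "d ^ q = d" "proj_eq (P x y d) v"
  shows "v \<in> Q_pts q \<longleftrightarrow> Inv x y d = 0"
proof -
  have pi: "v \<in> Pi_pts q" using assms Pi_char by blast
  obtain s where s: "s \<noteq> 0" "\<forall>i\<in>{1..6}. v i = s * P x y d i" using assms unfolding proj_eq_def by blast
  have e: "P x y d = vec6 (x*x) (x^q*x^q) d (y^q*y^q) (y*y) 0"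
    unfolding P_def by (simp add: power2_eq_square mult.commute[of 2] power_mult)
  have "(v 3)\<^sup>2 + v 1 * v 5 + v 2 * v 4 = s^2 * (d^2 + (x*y)^2 + ((x*y)^q)^2)"
    using s unfolding e by (simp add: vec6_def power_mult_distrib algebra_simps power2_eq_square)
  also have "\<dots> = s^2 * (Inv x y d)^2" by (simp add: Inv_def T_def sq_add)
  finally show ?thesis unfolding Q_pts_def using pi s by simp
qed


lemma mv_scale:
  assumes "\<forall>j\<in>{1..6}. u j = s * v j"
  shows "mat_vec M u i = s * mat_vec M v i"
  unfolding mat_vec_def using assms by (simp add: sum_distrib_left algebra_simps)

lemma orbit_char:
  assumes "proj_eq (P x y d) u"
  shows "v \<in> G_orbit q w u \<longleftrightarrow> (\<exists>a b c e. a * e + b * c = 1 \<and>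
     proj_eq (P (a*x+c*y) (b*x+e*y) (d + T (a*b*x^2) + T (c*e*y^2))) v)"
proof -
  obtain s where s: "s \<noteq> 0" "\<forall>i\<in>{1..6}. u i = s * P x y d i" using assms unfolding proj_eq_def by blast
  have "proj_eq (mat_vec (Mmat q w a b c e) u) v \<longleftrightarrow>
     proj_eq (P (a*x+c*y) (b*x+e*y) (d + T (a*b*x^2) + T (c*e*y^2))) v" for a b c e
  proof (rule pe_cong[OF _ s(1)])
    show "\<forall>i\<in>{1..6}. mat_vec (Mmat q w a b c e) u i =
       s * P (a*x+c*y) (b*x+e*y) (d + T (a*b*x^2) + T (c*e*y^2)) i"
      using mv_scale[OF s(2)] MP by simp
  qed
  thus ?thesis unfolding G_orbit_def by simp
qed

lemma sl2_trans:
  assumes "x \<noteq> 0 \<or> y \<noteq> 0" "X \<noteq> 0 \<or> Y \<noteq> 0"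
  shows "\<exists>a b c e::'a. a * e + b * c = 1 \<and> a*x+c*y = X \<and> b*x+e*y = Y"
proof -
  have "\<exists>c0 d0. x * d0 + y * c0 = 1" if "x \<noteq> 0 \<or> y \<noteq> 0" for x y :: 'a
  proof (cases "x = 0")
    case True thus ?thesis using that by (intro exI[of _ "1/y"] exI[of _ 0]) simp
  next
    case False thus ?thesis by (intro exI[of _ 0] exI[of _ "1/x"]) simp
  qed
  then obtain c0 d0 c1 d1 where h0: "x * d0 + y * c0 = 1" and h1: "X * d1 + Y * c1 = 1"
    using assms by metis
  define a where "a = X*d0 + c1*y"
  define c where "c = X*c0 + c1*x"
  define b where "b = Y*d0 + d1*y"
  define e where "e = Y*c0 + d1*x"
  have "a * e + b * c = X*d1*(x*d0+y*c0) + Y*c1*(x*d0+y*c0)"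
    unfolding a_def b_def c_def e_def by (simp add: algebra_simps)
  also have "\<dots> = X*d1 + Y*c1" using h0 by simp
  finally have 1: "a * e + b * c = 1" using h1 by simp
  have "a*x+c*y = X * (x*d0+y*c0) + 2 * (c1*x*y)" unfolding a_def c_def by (simp add: algebra_simps)
  hence 2: "a*x+c*y = X" using h0 two by simp
  have "b*x+e*y = Y * (x*d0+y*c0) + 2 * (d1*x*y)" unfolding b_def e_def by (simp add: algebra_simps)
  hence 3: "b*x+e*y = Y" using h0 two by simp
  show ?thesis using 1 2 3 by blast
qed


lemma inv_pres:
  assumes "a*e+b*c = (1::'a)"
  shows "Inv (a*x+c*y) (b*x+e*y) (d + T(a*b*x^2) + T(c*e*y^2)) = Inv x y d"
proof -
  have "(a*x+c*y)*(b*x+e*y) = a*b*x^2 + c*e*y^2 + (a*e+b*c)*(x*y)"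
    by (simp add: algebra_simps power2_eq_square)
  hence "(a*x+c*y)*(b*x+e*y) = a*b*x^2 + c*e*y^2 + x*y" using assms by simp
  hence "T ((a*x+c*y)*(b*x+e*y)) = T(a*b*x^2) + T(c*e*y^2) + T(x*y)" by (simp add: T_add)
  thus ?thesis unfolding Inv_def by (simp add: algebra_simps)
qed

lemma inj_pres:
  assumes "a*e+b*c = (1::'a)" "a*x+c*y = 0" "b*x+e*y = 0"
  shows "x = 0 \<and> y = 0"
proof -
  have "x = (a*e+b*c)*x + 2*(c*e*y)" using assms(1) two by simp
  also have "\<dots> = e*(a*x+c*y) + c*(b*x+e*y)" by (simp add: algebra_simps)
  finally have x: "x = 0" using assms by simp
  have "y = (a*e+b*c)*y + 2*(a*b*x)" using assms(1) two by simp
  also have "\<dots> = b*(a*x+c*y) + a*(b*x+e*y)" by (simp add: algebra_simps)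
  finally have "y = 0" using assms by simp
  with x show ?thesis by simp
qed

lemma Z_inv: "proj_eq (P x y d) v \<Longrightarrow> x = 0 \<and> y = 0 \<Longrightarrow> Inv x y d \<noteq> 0"
  using pe_nz P_nz unfolding Inv_def by fastforce

lemma Nsub: "(N_pt :: (nat \<Rightarrow> 'a) set) \<subseteq> Pi_pts q"
proof
  fix v :: "nat \<Rightarrow> 'a" assume "v \<in> N_pt"
  hence "proj_eq (P 0 0 1) v" unfolding N_pt_def proj_pt_def N_eq by simp
  thus "v \<in> Pi_pts q" unfolding Pi_char by (metis power_one)
qed

lemma cls:
  assumes "d' ^ q = d'" "proj_eq (P x' y' d') v"
  shows "v \<in> (if x=0 \<and> y=0 then N_pt else if Inv x y d = 0 then Q_pts q else Pi_pts q - (Q_pts q \<union> N_pt))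
     \<longleftrightarrow> (if x=0 \<and> y=0 then x'=0 \<and> y'=0 else \<not>(x'=0 \<and> y'=0) \<and> (Inv x y d = 0 \<longleftrightarrow> Inv x' y' d' = 0))"
proof -
  have N: "v \<in> N_pt \<longleftrightarrow> x' = 0 \<and> y' = 0" by (rule N_char[OF assms(2)])
  have Q: "v \<in> Q_pts q \<longleftrightarrow> Inv x' y' d' = 0" by (rule Q_char[OF assms])
  have Z: "x' = 0 \<and> y' = 0 \<Longrightarrow> Inv x' y' d' \<noteq> 0" by (rule Z_inv[OF assms(2)])
  have Pi: "v \<in> Pi_pts q" using Pi_char assms by blast
  show ?thesis
  proof (cases "x=0 \<and> y=0")
    case True thus ?thesis unfolding if_P[OF True] using N by simp
  next
    case False
    show ?thesis
    proof (cases "Inv x y d = 0")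
      case True
      have "v \<in> Q_pts q \<longleftrightarrow> \<not> (x' = 0 \<and> y' = 0) \<and> (Inv x y d = 0 \<longleftrightarrow> Inv x' y' d' = 0)"
        using Q Z True by blast
      thus ?thesis unfolding if_not_P[OF False] if_P[OF True] .
    next
      case F2: False
      have A: "v \<in> Pi_pts q - (Q_pts q \<union> N_pt) \<longleftrightarrow> \<not> (x' = 0 \<and> y' = 0) \<and> Inv x' y' d' \<noteq> 0"
        using Pi N Q by blast
      have B: "(if x=0 \<and> y=0 then N_pt else if Inv x y d = 0 then Q_pts q else Pi_pts q - (Q_pts q \<union> N_pt))
         = Pi_pts q - (Q_pts q \<union> N_pt)" unfolding if_not_P[OF False] if_not_P[OF F2] ..
      have C: "(if x=0 \<and> y=0 then x'=0 \<and> y'=0 else \<not>(x'=0 \<and> y'=0) \<and> (Inv x y d = 0 \<longleftrightarrow> Inv x' y' d' = 0))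
         \<longleftrightarrow> \<not> (x' = 0 \<and> y' = 0) \<and> Inv x' y' d' \<noteq> 0" unfolding if_not_P[OF False] using F2 by simp
      show ?thesis unfolding B C using A .
    qed
  qed
qed

lemma orbit_eq:
  assumes "d ^ q = d" "proj_eq (P x y d) u"
  shows "G_orbit q w u = (if x=0 \<and> y=0 then N_pt else if Inv x y d = 0 then Q_pts q
            else Pi_pts q - (Q_pts q \<union> N_pt))" (is "_ = ?R")
proof (rule set_eqI)
  fix v
  have RPi: "?R \<subseteq> Pi_pts q" using Nsub unfolding Q_pts_def by auto
  show "v \<in> G_orbit q w u \<longleftrightarrow> v \<in> ?R"
  proof
    assume "v \<in> G_orbit q w u"
    then obtain a b c e where g: "a * e + b * c = 1" and
      pv: "proj_eq (P (a*x+c*y) (b*x+e*y) (d + T (a*b*x^2) + T (c*e*y^2))) v"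
      using orbit_char[OF assms(2)] by blast
    have dq: "(d + T (a*b*x^2) + T (c*e*y^2)) ^ q = d + T (a*b*x^2) + T (c*e*y^2)"
      using assms(1) by (simp add: frob T_fq)
    have z: "(a*x+c*y = 0 \<and> b*x+e*y = 0) \<longleftrightarrow> x = 0 \<and> y = 0"
    proof
      assume "a*x+c*y = 0 \<and> b*x+e*y = 0" thus "x = 0 \<and> y = 0" using inj_pres[OF g] by blast
    next
      assume "x = 0 \<and> y = 0" thus "a*x+c*y = 0 \<and> b*x+e*y = 0" by simp
    qed
    show "v \<in> ?R" unfolding cls[OF dq pv] z inv_pres[OF g] by simp
  next
    assume vR: "v \<in> ?R"
    then obtain x' y' d' where h: "d' ^ q = d'" "proj_eq (P x' y' d') v"
      using RPi Pi_char by blast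
    note c = vR[unfolded cls[OF h]]
    show "v \<in> G_orbit q w u"
    proof (cases "x = 0 \<and> y = 0")
      case True
      hence xy': "x' = 0 \<and> y' = 0" using c by simp
      have d0: "d \<noteq> 0" using True assms(2) pe_nz P_nz by blast
      have d'0: "d' \<noteq> 0" using xy' h(2) pe_nz P_nz by blast
      have "\<forall>i\<in>{1..6}. P x' y' d' i = (d'/d) * P 0 0 d i"
        using xy' d0 qpos by (auto simp: P_def vec6_def zero_power)
      hence "proj_eq (P 0 0 d) v" using pe_cong[of "P x' y' d'" "d'/d" "P 0 0 d" v] h d0 d'0 by simp
      hence "proj_eq (P (1*x+0*y) (0*x+1*y) (d + T (1*0*x^2) + T (0*1*y^2))) v"
        using True by simp
      moreover have "(1::'a)*1+0*0 = 1" by simp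
      ultimately have "\<exists>a b c e. a*e+b*c = 1 \<and>
          proj_eq (P (a*x+c*y) (b*x+e*y) (d + T (a*b*x^2) + T (c*e*y^2))) v" by blast
      thus ?thesis using orbit_char[OF assms(2)] by blast
    next
      case False
      hence nz': "\<not>(x'=0 \<and> y'=0)" and iff: "Inv x y d = 0 \<longleftrightarrow> Inv x' y' d' = 0" using c by auto
      have dq': "(Inv x' y' d') ^ q = Inv x' y' d'" using h(1) by (simp add: Inv_def frob T_fq)
      have dq: "(Inv x y d) ^ q = Inv x y d" using assms(1) by (simp add: Inv_def frob T_fq)
      obtain m where m: "m ^ q = m" "m \<noteq> 0" "m^2 * Inv x' y' d' = Inv x y d"
      proof (cases "Inv x y d = 0")
        case True thus ?thesis using iff that[of 1] by simp
      next
        case False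
        hence I'0: "Inv x' y' d' \<noteq> 0" using iff by simp
        define r where "r = Inv x y d / Inv x' y' d'"
        obtain m where m2: "m^2 = r" using sq_surj by blast
        have "r ^ q = r" unfolding r_def power_divide dq dq' ..
        hence "m ^ q = m" using sqrt_fq m2 by blast
        moreover have "m \<noteq> 0" using m2 False I'0 unfolding r_def by auto
        moreover have "m^2 * Inv x' y' d' = Inv x y d" using m2 I'0 unfolding r_def by simp
        ultimately show ?thesis using that by blast
      qed
      have nzX: "m*x' \<noteq> 0 \<or> m*y' \<noteq> 0" using nz' m(2) by simp
      obtain a b c e where g: "a*e+b*c = 1" "a*x+c*y = m*x'" "b*x+e*y = m*y'"
        using sl2_trans[OF _ nzX] False by blast
      define D where "D = d + T (a*b*x^2) + T (c*e*y^2)"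
      have "Inv (m*x') (m*y') D = Inv x y d"
        using inv_pres[OF g(1), of x y d] g(2,3) unfolding D_def by simp
      also have "\<dots> = m^2 * d' + m^2 * T (x'*y')"
        using m(3) unfolding Inv_def by (simp add: algebra_simps)
      also have "m^2 * T (x'*y') = T ((m^2) * (x'*y'))"
      proof -
        have mq2: "(m^2)^q = m^2" using m(1) by (simp add: power2_eq_square power_mult_distrib)
        show ?thesis using T_scale[OF mq2, of "x'*y'"] by simp
      qed
      finally have "D + T (m*x'*(m*y')) = m^2 * d' + T (m^2 * (x'*y'))" unfolding Inv_def
        by (simp add: mult.assoc)
      hence D: "D = m^2 * d'" by (simp add: power2_eq_square algebra_simps)
      have mq: "m ^ (2*q) = m^2" using m(1) by (metis power_mult mult.commute)
      have "\<forall>i\<in>{1..6}. P (m*x') (m*y') (m^2*d') i = m^2 * P x' y' d' i"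
        using mq by (auto simp: P_def vec6_def power_mult_distrib)
      hence "proj_eq (P (m*x') (m*y') (m^2*d')) v"
        using pe_cong[of "P (m*x') (m*y') (m^2*d')" "m^2" "P x' y' d'" v] h m(2) by simp
      hence "proj_eq (P (a*x+c*y) (b*x+e*y) (d + T (a*b*x^2) + T (c*e*y^2))) v"
        using g D unfolding D_def by simp
      thus ?thesis using orbit_char[OF assms(2)] g(1) by blast
    qed
  qed
qed

end

lemma fermat_gen:
  fixes x :: "'a :: {field,finite}"
  shows "x ^ card (UNIV :: 'a set) = x"
proof (cases "x = 0")
  case False
  have "x * (\<Prod>y\<in>UNIV-{0}. x * y) = x * x ^ (card (UNIV :: 'a set) - 1) * \<Prod>(UNIV-{0})"
    by (simp add: prod.distrib mult_ac)
  also have "x * x ^ (card (UNIV :: 'a set) - 1) = x ^ Suc (card (UNIV :: 'a set) - 1)"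
    by (subst power_Suc) auto
  also have "Suc (card (UNIV :: 'a set) - 1) = card (UNIV :: 'a set)"
    using finite_UNIV_card_ge_0[where ?'a = 'a] by simp
  also have "(\<Prod>y\<in>UNIV-{0}. x * y) = (\<Prod>y\<in>UNIV-{0}. y)"
    by (rule prod.reindex_bij_witness[of _ "\<lambda>y. y / x" "\<lambda>y. x * y"]) (use False in auto)
  finally show ?thesis
    by simp
qed (use finite_UNIV_card_ge_0[where ?'a = 'a] in auto)

lemma frob_gen:
  assumes "(2::'a::field) = 0"
  shows "((x::'a) + y) ^ (2 ^ n) = x ^ (2 ^ n) + y ^ (2 ^ n)"
proof (induction n)
  case 0 show ?case by simp
next
  case (Suc n)
  have sq: "(a + b) ^ 2 = a ^ 2 + b ^ 2" for a b :: 'a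
  proof -
    have "(a + b) ^ 2 = a^2 + b^2 + 2 * (a * b)" by (simp add: power2_eq_square algebra_simps)
    thus ?thesis using assms by simp
  qed
  have "(x + y) ^ (2 ^ Suc n) = ((x + y) ^ (2 ^ n)) ^ 2" by (simp add: power_mult[symmetric] mult.commute)
  also have "\<dots> = (x ^ (2 ^ n)) ^ 2 + (y ^ (2 ^ n)) ^ 2" using Suc sq by simp
  also have "\<dots> = x ^ (2 ^ Suc n) + y ^ (2 ^ Suc n)" by (simp add: power_mult[symmetric] mult.commute)
  finally show ?case .
qed

theorem mainTheorem13:
  fixes q k :: nat and w :: "'a::{field,finite}"
  assumes "k \<ge> 1" and "q = 2 ^ k" and "card (UNIV :: 'a set) = q ^ 2"
    and "w \<notin> subfield_q q" and "w + w ^ q = 1"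
  shows "{G_orbit q w u | u. u \<in> Pi_pts q} =
           {N_pt, Q_pts q, Pi_pts q - (Q_pts q \<union> N_pt)}
         \<and> card {N_pt, Q_pts q, Pi_pts q - (Q_pts q \<union> (N_pt :: (nat \<Rightarrow> 'a) set))} = 3"
proof -
  have fq2: "x ^ (q * q) = x" for x :: 'a
    using fermat_gen[of x] assms(3) by (simp add: power2_eq_square)
  have ev: "even (q * q)" using assms(1,2) by simp
  have "(-1::'a) ^ (q*q) = 1" using ev by simp
  hence m1: "(-1::'a) = 1" using fq2[of "-1"] by simp
  have two: "(2::'a) = 0"
  proof -
    have "(2::'a) = 1 - (-1)" by simp
    thus ?thesis using m1 by simp
  qed
  have frob: "(x + y) ^ q = x ^ q + y ^ q" for x y :: 'a
    using frob_gen[OF two] assms(2) by simp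
  have qpos: "q > 0" using assms(2) by simp
  interpret c2f q w using two frob fq2 qpos by unfold_locales auto
  define R where "R = Pi_pts q - (Q_pts q \<union> (N_pt :: (nat \<Rightarrow> 'a) set))"
  have nz1: "nonzero6 (P 0 0 (1::'a))" "nonzero6 (P 1 0 (0::'a))" "nonzero6 (P 1 0 (1::'a))"
    by (simp_all add: P_nz)
  have pe: "proj_eq (P 0 0 (1::'a)) (P 0 0 1)" "proj_eq (P 1 0 (0::'a)) (P 1 0 0)"
    "proj_eq (P 1 0 (1::'a)) (P 1 0 1)"
    using nz1 pe_refl by auto
  have pi: "P 0 0 (1::'a) \<in> Pi_pts q" "P 1 0 (0::'a) \<in> Pi_pts q" "P 1 0 (1::'a) \<in> Pi_pts q"
    using pe unfolding Pi_char by (metis power_one zero_q)+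
  have I: "Inv 0 0 (1::'a) = 1" "Inv 1 0 (0::'a) = 0" "Inv 1 0 (1::'a) = 1"
    by (simp_all add: Inv_def)
  have oN: "G_orbit q w (P 0 0 1) = N_pt" using orbit_eq[OF _ pe(1)] by simp
  have oQ: "G_orbit q w (P 1 0 0) = Q_pts q" using orbit_eq[OF _ pe(2)] I by simp
  have oR: "G_orbit q w (P 1 0 1) = R" using orbit_eq[OF _ pe(3)] I unfolding R_def by simp
  have A: "{G_orbit q w u | u. u \<in> Pi_pts q} = {N_pt, Q_pts q, R}"
  proof
    show "{G_orbit q w u | u. u \<in> Pi_pts q} \<subseteq> {N_pt, Q_pts q, R}"
    proof
      fix S assume "S \<in> {G_orbit q w u | u. u \<in> Pi_pts q}"
      then obtain u where u: "u \<in> Pi_pts q" "S = G_orbit q w u" by blast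
      then obtain x y d where h: "d ^ q = d" "proj_eq (P x y d) u" using Pi_char by blast
      show "S \<in> {N_pt, Q_pts q, R}" using orbit_eq[OF h] u(2) unfolding R_def by simp
    qed
  next
    show "{N_pt, Q_pts q, R} \<subseteq> {G_orbit q w u | u. u \<in> Pi_pts q}"
      using oN oQ oR pi by blast
  qed
  have n1: "P 0 0 1 \<in> (N_pt :: (nat \<Rightarrow> 'a) set)" using N_char[OF pe(1)] by simp
  have n2: "P 0 0 1 \<notin> Q_pts q" using Q_char[OF _ pe(1)] I by simp
  have q1: "P 1 0 0 \<in> Q_pts q" using Q_char[OF _ pe(2)] I by simp
  have B: "card {N_pt, Q_pts q, R} = 3"
    using n1 n2 q1 unfolding R_def by (auto simp: card_insert_if)
  show ?thesis using A B unfolding R_def by simp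
qed

end
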